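(* Let $G$ be a connected graph. (a) If $G$ admits a pairing strong resolving set, then $O_{\rm SR}(G)=\mathcal{M}$. (b) If $G$ admits a quasi-pairing strong resolving set, then $O_{\rm SR}(G)\in\{\mathcal{M},\mathcal{N}\}$. (c) If $\Delta(G_{\rm SR})\ge 2$, then $O_{\rm SR}(G)\in\{\mathcal{N},\mathcal{B}\}$. (d) If for every $u\in V(G_{\rm SR})$ the subgraph of $G_{\rm SR}$ induced by $V(G_{\rm SR})\setminus\{u\}$ has maximum degree at least $2$, then $O_{\rm SR}(G)=\mathcal{B}$.
   Context: All graphs are finite, simple and undirected; $d(x,y)$ is the shortest-path distance; $\Delta(\cdot)$ denotes maximum degree. A set $S\subseteq V(G)$ is a strong resolving set of a connected graph $G$ if for all distinct $x,y\in V(G)$ there exists $z\in S$ such that $x$ lies on a $y$–$z$ geodesic or $y$ lies on an $x$–$z$ geodesic. A vertex $u$ is maximally distant from $v$ if $d(u,v)\ge d(w,v)$ for every neighbor $w$ of $u$; $u,v$ are mutually maximally distant (MMD) if each is maximally distant from the other. The strong resolving graph $G_{\rm SR}$ has vertex set $\{x: x\text{ is MMD with some }y\}$ and edges exactly the MMD pairs. The Maker–Breaker strong resolving game on $G$: Maker and Breaker alternately select a not-yet-chosen vertex of $G$; Maker wins if the vertices he selects contain a strong resolving set of $G$, and Breaker wins otherwise. In the M-game Maker moves first, in the B-game Breaker moves first. $O_{\rm SR}(G)=\mathcal{M}$ if Maker has a winning strategy in both the M-game and the B-game, $O_{\rm SR}(G)=\mathcal{B}$ if Breaker has a winning strategy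 in both, and $O_{\rm SR}(G)=\mathcal{N}$ if the first player has a winning strategy in each. A family $X=\{\{u_i,w_i\}: i\in[\beta]\}$ with $\bigcup X\subseteq V(G_{\rm SR})$ and $|\bigcup X|=2\beta$ is a pairing strong resolving set of $G$ if every $Z\subseteq V(G_{\rm SR})$ satisfying ($\dagger$) $|Z|=\beta$ and $Z\cap\{u_i,w_i\}\ne\emptyset$ for all $i\in[\beta]$ is a strong resolving set of $G$. Such an $X$ is a quasi-pairing strong resolving set of $G$ if there is a vertex $v\in V(G_{\rm SR})\setminus\bigcup X$ such that $Z\cup\{v\}$ is a strong resolving set of $G$ for every $Z\subseteq V(G_{\rm SR})$ satisfying ($\dagger$). *)

theory Defs
  imports Main
begin

definition simple_graph :: "'a set \<Rightarrow> ('a \<Rightarrow> 'a \<Rightarrow> bool) \<Rightarrow> bool" where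
  "simple_graph V E \<longleftrightarrow> finite V \<and> (\<forall>x y. E x y \<longrightarrow> x \<in> V \<and> y \<in> V)
     \<and> (\<forall>x y. E x y \<longrightarrow> E y x) \<and> (\<forall>x. \<not> E x x)"

definition walk :: "'a set \<Rightarrow> ('a \<Rightarrow> 'a \<Rightarrow> bool) \<Rightarrow> 'a list \<Rightarrow> bool" where
  "walk V E xs \<longleftrightarrow> xs \<noteq> [] \<and> set xs \<subseteq> V \<and> successively E xs"

definition connected_graph :: "'a set \<Rightarrow> ('a \<Rightarrow> 'a \<Rightarrow> bool) \<Rightarrow> bool" where
  "connected_graph V E \<longleftrightarrow> simple_graph V E \<and> V \<noteq> {} \<and>
     (\<forall>x\<in>V. \<forall>y\<in>V. \<exists>xs. walk V E xs \<and> hd xs = x \<and> last xs = y)"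

definition dist :: "'a set \<Rightarrow> ('a \<Rightarrow> 'a \<Rightarrow> bool) \<Rightarrow> 'a \<Rightarrow> 'a \<Rightarrow> nat" where
  "dist V E x y = (LEAST n. \<exists>xs. walk V E xs \<and> hd xs = x \<and> last xs = y \<and> length xs = Suc n)"

definition on_geodesic :: "'a set \<Rightarrow> ('a \<Rightarrow> 'a \<Rightarrow> bool) \<Rightarrow> 'a \<Rightarrow> 'a \<Rightarrow> 'a \<Rightarrow> bool" where
  "on_geodesic V E x y z \<longleftrightarrow> (\<exists>xs. walk V E xs \<and> hd xs = y \<and> last xs = z
      \<and> length xs = Suc (dist V E y z) \<and> x \<in> set xs)"

definition strong_resolving_set :: "'a set \<Rightarrow> ('a \<Rightarrow> 'a \<Rightarrow> bool) \<Rightarrow> 'a set \<Rightarrow> bool" where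
  "strong_resolving_set V E S \<longleftrightarrow> S \<subseteq> V \<and>
     (\<forall>x\<in>V. \<forall>y\<in>V. x \<noteq> y \<longrightarrow>
        (\<exists>z\<in>S. on_geodesic V E x y z \<or> on_geodesic V E y x z))"

definition maximally_distant :: "'a set \<Rightarrow> ('a \<Rightarrow> 'a \<Rightarrow> bool) \<Rightarrow> 'a \<Rightarrow> 'a \<Rightarrow> bool" where
  "maximally_distant V E u v \<longleftrightarrow> u \<in> V \<and> v \<in> V \<and>
     (\<forall>w. E u w \<longrightarrow> dist V E w v \<le> dist V E u v)"

text \<open>Edges of the strong resolving graph: MMD pairs of distinct vertices.\<close>
definition mmd :: "'a set \<Rightarrow> ('a \<Rightarrow> 'a \<Rightarrow> bool) \<Rightarrow> 'a \<Rightarrow> 'a \<Rightarrow> bool" where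
  "mmd V E u v \<longleftrightarrow> u \<noteq> v \<and> maximally_distant V E u v \<and> maximally_distant V E v u"

definition VSR :: "'a set \<Rightarrow> ('a \<Rightarrow> 'a \<Rightarrow> bool) \<Rightarrow> 'a set" where
  "VSR V E = {x. \<exists>y. maximally_distant V E x y \<and> maximally_distant V E y x}"

definition SR_induced_maxdeg_ge2 :: "'a set \<Rightarrow> ('a \<Rightarrow> 'a \<Rightarrow> bool) \<Rightarrow> 'a set \<Rightarrow> bool" where
  "SR_induced_maxdeg_ge2 V E U \<longleftrightarrow> (\<exists>x\<in>U. card {w\<in>U. mmd V E x w} \<ge> 2)"

text \<open>Pairing strong resolving set: a finite family of disjoint 2-subsets of V(G_SR).\<close>
definition pair_family :: "'a set \<Rightarrow> ('a \<Rightarrow> 'a \<Rightarrow> bool) \<Rightarrow> 'a set set \<Rightarrow> bool" where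
  "pair_family V E X \<longleftrightarrow> finite X \<and> (\<forall>p\<in>X. card p = 2) \<and> \<Union>X \<subseteq> VSR V E
     \<and> card (\<Union>X) = 2 * card X"

definition transversal :: "'a set \<Rightarrow> ('a \<Rightarrow> 'a \<Rightarrow> bool) \<Rightarrow> 'a set set \<Rightarrow> 'a set \<Rightarrow> bool" where
  "transversal V E X Z \<longleftrightarrow> Z \<subseteq> VSR V E \<and> card Z = card X \<and> (\<forall>p\<in>X. Z \<inter> p \<noteq> {})"

definition pairing_srs :: "'a set \<Rightarrow> ('a \<Rightarrow> 'a \<Rightarrow> bool) \<Rightarrow> 'a set set \<Rightarrow> bool" where
  "pairing_srs V E X \<longleftrightarrow> pair_family V E X \<and>
     (\<forall>Z. transversal V E X Z \<longrightarrow> strong_resolving_set V E Z)"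

definition quasi_pairing_srs :: "'a set \<Rightarrow> ('a \<Rightarrow> 'a \<Rightarrow> bool) \<Rightarrow> 'a set set \<Rightarrow> bool" where
  "quasi_pairing_srs V E X \<longleftrightarrow> pair_family V E X \<and>
     (\<exists>v \<in> VSR V E - \<Union>X. \<forall>Z. transversal V E X Z \<longrightarrow> strong_resolving_set V E (insert v Z))"

text \<open>Maker--Breaker game on board V with Maker's winning condition W (evaluated on Maker's
  final set). Positions: Maker's set M, Breaker's set B, and whether Maker is to move.\<close>

inductive maker_wins :: "'a set \<Rightarrow> ('a set \<Rightarrow> bool) \<Rightarrow> 'a set \<Rightarrow> 'a set \<Rightarrow> bool \<Rightarrow> bool"
  for V W where
  mw_end: "V \<subseteq> M \<union> B \<Longrightarrow> W M \<Longrightarrow> maker_wins V W M B t"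
| mw_maker: "v \<in> V - (M \<union> B) \<Longrightarrow> maker_wins V W (insert v M) B False \<Longrightarrow> maker_wins V W M B True"
| mw_breaker: "V - (M \<union> B) \<noteq> {} \<Longrightarrow> (\<forall>v \<in> V - (M \<union> B). maker_wins V W M (insert v B) True)
     \<Longrightarrow> maker_wins V W M B False"

inductive breaker_wins :: "'a set \<Rightarrow> ('a set \<Rightarrow> bool) \<Rightarrow> 'a set \<Rightarrow> 'a set \<Rightarrow> bool \<Rightarrow> bool"
  for V W where
  bw_end: "V \<subseteq> M \<union> B \<Longrightarrow> \<not> W M \<Longrightarrow> breaker_wins V W M B t"
| bw_breaker: "v \<in> V - (M \<union> B) \<Longrightarrow> breaker_wins V W M (insert v B) True \<Longrightarrow> breaker_wins V W M B False"
| bw_maker: "V - (M \<union> B) \<noteq> {} \<Longrightarrow> (\<forall>v \<in> V - (M \<union> B). breaker_wins V W (insert v M) B False)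
     \<Longrightarrow> breaker_wins V W M B True"

definition sr_win :: "'a set \<Rightarrow> ('a \<Rightarrow> 'a \<Rightarrow> bool) \<Rightarrow> 'a set \<Rightarrow> bool" where
  "sr_win V E M \<longleftrightarrow> (\<exists>S\<subseteq>M. strong_resolving_set V E S)"

(* M-game: Maker first (True); B-game: Breaker first (False) *)
definition outcome_M :: "'a set \<Rightarrow> ('a \<Rightarrow> 'a \<Rightarrow> bool) \<Rightarrow> bool" where
  "outcome_M V E \<longleftrightarrow> maker_wins V (sr_win V E) {} {} True \<and> maker_wins V (sr_win V E) {} {} False"

definition outcome_B :: "'a set \<Rightarrow> ('a \<Rightarrow> 'a \<Rightarrow> bool) \<Rightarrow> bool" where
  "outcome_B V E \<longleftrightarrow> breaker_wins V (sr_win V E) {} {} True \<and> breaker_wins V (sr_win V E) {} {} False"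

definition outcome_N :: "'a set \<Rightarrow> ('a \<Rightarrow> 'a \<Rightarrow> bool) \<Rightarrow> bool" where
  "outcome_N V E \<longleftrightarrow> maker_wins V (sr_win V E) {} {} True \<and> breaker_wins V (sr_win V E) {} {} False"

end

theory Submission
  imports Defs
begin


lemma card_free_less:
  assumes "finite V" "M \<subseteq> M'" "B \<subseteq> B'" "v \<in> V - (M \<union> B)" "v \<in> M' \<union> B'"
  shows "card (V - (M' \<union> B')) < card (V - (M \<union> B))"
  apply (rule psubset_card_mono)
  using assms by auto

lemma determined:
  assumes fin: "finite V"
  shows "maker_wins V W M B t \<or> breaker_wins V W M B t"
proof (induction "card (V - (M \<union> B))" arbitrary: M B t rule: less_induct)
  case less
  show ?case
  proof (cases "V \<subseteq> M \<union> B")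
    case True then show ?thesis by (cases "W M") (auto intro: mw_end bw_end)
  next
    case False
    hence ne: "V - (M \<union> B) \<noteq> {}" by auto
    have IH1: "maker_wins V W (insert v M) B t' \<or> breaker_wins V W (insert v M) B t'"
      if "v \<in> V - (M \<union> B)" for v t'
      by (rule less) (rule card_free_less[OF fin], use that in auto)
    have IH2: "maker_wins V W M (insert v B) t' \<or> breaker_wins V W M (insert v B) t'"
      if "v \<in> V - (M \<union> B)" for v t'
      by (rule less) (rule card_free_less[OF fin], use that in auto)
    show ?thesis
    proof (cases t)
      case True
      show ?thesis
      proof (cases "\<exists>v\<in>V - (M \<union> B). maker_wins V W (insert v M) B False")
        case True
        then obtain v where "v \<in> V - (M \<union> B)" "maker_wins V W (insert v M) B False" by blast
        then show ?thesis using \<open>t\<close> by (auto intro: mw_maker)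
      next
        case False
        then have "\<forall>v\<in>V - (M \<union> B). breaker_wins V W (insert v M) B False" using IH1 by blast
        then show ?thesis using \<open>t\<close> ne by (auto intro: bw_maker)
      qed
    next
      case f: False
      show ?thesis
      proof (cases "\<exists>v\<in>V - (M \<union> B). breaker_wins V W M (insert v B) True")
        case True
        then obtain v where "v \<in> V - (M \<union> B)" "breaker_wins V W M (insert v B) True" by blast
        then show ?thesis using f by (auto intro: bw_breaker)
      next
        case False
        then have "\<forall>v\<in>V - (M \<union> B). maker_wins V W M (insert v B) True" using IH2 by blast
        then show ?thesis using f ne by (auto intro: mw_breaker)
      qed
    qed
  qed
qed

lemma breaker_strategy:
  assumes fin: "finite V" and w: "w1 \<in> V" "w2 \<in> V" "w1 \<noteq> w2"
    and nw: "\<And>M. x \<notin> M \<Longrightarrow> (w1 \<notin> M \<or> w2 \<notin> M) \<Longrightarrow> \<not> W M"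
  shows "(x \<in> B \<and> x \<notin> M \<and> ((w1 \<notin> M \<and> w2 \<notin> M) \<or> (w1 \<in> B \<and> w1 \<notin> M) \<or> (w2 \<in> B \<and> w2 \<notin> M))
           \<longrightarrow> breaker_wins V W M B True)
       \<and> (x \<in> B \<and> x \<notin> M \<and> (w1 \<notin> M \<or> w2 \<notin> M) \<longrightarrow> breaker_wins V W M B False)"
proof (induction "card (V - (M \<union> B))" arbitrary: M B rule: less_induct)
  case less
  show ?case
  proof (cases "V \<subseteq> M \<union> B")
    case True then show ?thesis using nw by (auto intro: bw_end)
  next
    case False
    hence ne: "V - (M \<union> B) \<noteq> {}" by auto
    have IH1: "breaker_wins V W (insert v M) B False"
      if "v \<in> V - (M \<union> B)" "x \<in> B \<and> x \<notin> insert v M \<and> (w1 \<notin> insert v M \<or> w2 \<notin> insert v M)" for v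
      using less[of "insert v M" B] card_free_less[OF fin, of M "insert v M" B B v] that by auto
    have IH2: "breaker_wins V W M (insert v B) True"
      if "v \<in> V - (M \<union> B)" "x \<in> insert v B \<and> x \<notin> M \<and> ((w1 \<notin> M \<and> w2 \<notin> M) \<or> (w1 \<in> insert v B \<and> w1 \<notin> M) \<or> (w2 \<in> insert v B \<and> w2 \<notin> M))" for v
      using less[of M "insert v B"] card_free_less[OF fin, of M M B "insert v B" v] that by auto
    show ?thesis
    proof (intro conjI impI)
      assume I: "x \<in> B \<and> x \<notin> M \<and> ((w1 \<notin> M \<and> w2 \<notin> M) \<or> (w1 \<in> B \<and> w1 \<notin> M) \<or> (w2 \<in> B \<and> w2 \<notin> M))"
      have "\<forall>v\<in>V - (M \<union> B). breaker_wins V W (insert v M) B False"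
      proof
        fix v assume v: "v \<in> V - (M \<union> B)"
        show "breaker_wins V W (insert v M) B False"
          apply (rule IH1[OF v]) using I v w by auto
      qed
      then show "breaker_wins V W M B True" using ne by (auto intro: bw_maker)
    next
      assume K: "x \<in> B \<and> x \<notin> M \<and> (w1 \<notin> M \<or> w2 \<notin> M)"
      show "breaker_wins V W M B False"
      proof (cases "w1 \<in> V - (M \<union> B)")
        case True
        then show ?thesis using IH2[OF True] K by (auto intro: bw_breaker)
      next
        case F1: False
        show ?thesis
        proof (cases "w2 \<in> V - (M \<union> B)")
          case True
          then show ?thesis using IH2[OF True] K by (auto intro: bw_breaker)
        next
          case F2: False
          obtain v where v: "v \<in> V - (M \<union> B)" using ne by blast
          have "breaker_wins V W M (insert v B) True"
            apply (rule IH2[OF v]) using K F1 F2 w by auto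
          then show ?thesis using v by (auto intro: bw_breaker)
        qed
      qed
    qed
  qed
qed

lemma maker_strategy:
  assumes fin: "finite V" and two: "\<forall>p\<in>X. card p = 2"
    and disj: "\<forall>p\<in>X. \<forall>q\<in>X. p \<noteq> q \<longrightarrow> p \<inter> q = {}"
    and sub: "\<Union>X \<subseteq> V"
    and win: "\<And>M. A \<subseteq> M \<Longrightarrow> (\<forall>p\<in>X. p \<inter> M \<noteq> {}) \<Longrightarrow> W M"
  shows "A \<subseteq> M \<and> (\<forall>p\<in>X. p \<inter> M \<noteq> {} \<or> p \<inter> B = {}) \<longrightarrow>
           maker_wins V W M B True \<and> maker_wins V W M B False"
proof (induction "card (V - (M \<union> B))" arbitrary: M B rule: less_induct)
  case less
  show ?case
  proof (intro impI)
    assume P: "A \<subseteq> M \<and> (\<forall>p\<in>X. p \<inter> M \<noteq> {} \<or> p \<inter> B = {})"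
    show "maker_wins V W M B True \<and> maker_wins V W M B False"
    proof (cases "V \<subseteq> M \<union> B")
      case True
      have "\<forall>p\<in>X. p \<inter> M \<noteq> {}"
      proof
        fix p assume p: "p \<in> X"
        then have "p \<noteq> {}" using two by fastforce
        moreover have "p \<subseteq> M \<union> B" using p sub True by blast
        ultimately show "p \<inter> M \<noteq> {}" using P p by blast
      qed
      then have "W M" using win P by blast
      then show ?thesis using True by (auto intro: mw_end)
    next
      case False
      hence ne: "V - (M \<union> B) \<noteq> {}" by auto
      obtain v0 where v0: "v0 \<in> V - (M \<union> B)" using ne by blast
      have "maker_wins V W (insert v0 M) B False"
        using less[of "insert v0 M" B] card_free_less[OF fin, of M "insert v0 M" B B v0] v0 P by auto
      then have T: "maker_wins V W M B True" using v0 by (auto intro: mw_maker)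
      have "\<forall>v\<in>V - (M \<union> B). maker_wins V W M (insert v B) True"
      proof
        fix v assume v: "v \<in> V - (M \<union> B)"
        show "maker_wins V W M (insert v B) True"
        proof (cases "\<exists>p\<in>X. v \<in> p \<and> p \<inter> M = {}")
          case True
          then obtain p where p: "p \<in> X" "v \<in> p" "p \<inter> M = {}" by blast
          obtain a b where ab: "p = {a, b}" "a \<noteq> b" using two p card_2_iff by metis
          obtain u where u: "p = {v, u}" "u \<noteq> v" using ab p(2) by blast
          have pB: "p \<inter> B = {}" using P p by blast
          have uV: "u \<in> V - (M \<union> insert v B)" using u p pB sub by auto
          have Q: "A \<subseteq> insert u M \<and> (\<forall>q\<in>X. q \<inter> insert u M \<noteq> {} \<or> q \<inter> insert v B = {})"
          proof -
            have "q \<inter> insert u M \<noteq> {} \<or> q \<inter> insert v B = {}" if q: "q \<in> X" for q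
            proof (cases "q = p")
              case True then show ?thesis using u by auto
            next
              case False
              then have "v \<notin> q" using disj p q by blast
              then show ?thesis using P q by blast
            qed
            then show ?thesis using P by blast
          qed
          have "maker_wins V W (insert u M) (insert v B) False"
            using less[of "insert u M" "insert v B"] card_free_less[OF fin, of M "insert u M" B "insert v B" v] v Q by auto
          then show ?thesis using uV by (auto intro: mw_maker)
        next
          case False
          have Q: "A \<subseteq> M \<and> (\<forall>q\<in>X. q \<inter> M \<noteq> {} \<or> q \<inter> insert v B = {})"
            using P False by blast
          show ?thesis
            using less[of M "insert v B"] card_free_less[OF fin, of M M B "insert v B" v] v Q by auto
        qed
      qed
      then have "maker_wins V W M B False" using ne by (auto intro: mw_breaker)
      with T show ?thesis by blast
    qed
  qed
qed



lemma walk_rev: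
  assumes "simple_graph V E" "walk V E xs" shows "walk V E (rev xs)"
proof -
  have "successively (\<lambda>x y. E y x) xs"
    using assms unfolding walk_def simple_graph_def
    by (auto elim!: successively_mono)
  then show ?thesis using assms unfolding walk_def by simp
qed

lemma dist_sym:
  assumes sg: "simple_graph V E" shows "dist V E a b = dist V E b a"
proof -
  have "(\<exists>xs. walk V E xs \<and> hd xs = a \<and> last xs = b \<and> length xs = Suc n) \<longleftrightarrow>
        (\<exists>xs. walk V E xs \<and> hd xs = b \<and> last xs = a \<and> length xs = Suc n)" for a b n
  proof
    assume "\<exists>xs. walk V E xs \<and> hd xs = a \<and> last xs = b \<and> length xs = Suc n"
    then obtain xs where xs: "walk V E xs" "hd xs = a" "last xs = b" "length xs = Suc n" by blast
    then have "xs \<noteq> []" by (auto simp: walk_def)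
    then show "\<exists>xs. walk V E xs \<and> hd xs = b \<and> last xs = a \<and> length xs = Suc n"
      using xs walk_rev[OF sg xs(1)] by (intro exI[of _ "rev xs"]) (auto simp: hd_rev last_rev)
  next
    assume "\<exists>xs. walk V E xs \<and> hd xs = b \<and> last xs = a \<and> length xs = Suc n"
    then obtain xs where xs: "walk V E xs" "hd xs = b" "last xs = a" "length xs = Suc n" by blast
    then have "xs \<noteq> []" by (auto simp: walk_def)
    then show "\<exists>xs. walk V E xs \<and> hd xs = a \<and> last xs = b \<and> length xs = Suc n"
      using xs walk_rev[OF sg xs(1)] by (intro exI[of _ "rev xs"]) (auto simp: hd_rev last_rev)
  qed
  then show ?thesis unfolding dist_def by simp
qed

lemma dist_le:
  assumes "walk V E xs" "hd xs = a" "last xs = b" "length xs = Suc n"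
  shows "dist V E a b \<le> n"
  unfolding dist_def using assms by (intro Least_le) blast

lemma dist_walk:
  assumes "walk V E xs" "hd xs = a" "last xs = b"
  shows "\<exists>ws. walk V E ws \<and> hd ws = a \<and> last ws = b \<and> length ws = Suc (dist V E a b)"
proof -
  have "xs \<noteq> []" using assms by (auto simp: walk_def)
  then have "length xs = Suc (length xs - 1)" by simp
  then have ex: "\<exists>n xs. walk V E xs \<and> hd xs = a \<and> last xs = b \<and> length xs = Suc n" using assms by blast
  show ?thesis unfolding dist_def by (rule LeastI_ex) (use ex in blast)
qed

lemma split_not_last:
  assumes "x \<in> set xs" "x \<noteq> last xs"
  shows "\<exists>ys w zs. xs = ys @ x # w # zs"
proof -
  obtain ys zs where xs: "xs = ys @ x # zs" using split_list assms(1) by metis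
  then have "zs \<noteq> []" using assms(2) by auto
  then obtain w zs' where "zs = w # zs'" by (cases zs) auto
  then show ?thesis using xs by blast
qed

lemma geo_main:
  assumes sg: "simple_graph V E" and md: "maximally_distant V E u v"
    and og: "on_geodesic V E u v z" and uz: "u \<noteq> z"
  shows False
proof -
  obtain xs where xs: "walk V E xs" "hd xs = v" "last xs = z" "length xs = Suc (dist V E v z)" "u \<in> set xs"
    using og unfolding on_geodesic_def by blast
  obtain ys w zs where sp: "xs = ys @ u # w # zs" using split_not_last[OF xs(5)] xs(3) uz by blast
  have suc: "successively E xs" and sV: "set xs \<subseteq> V" using xs(1) by (auto simp: walk_def)
  have Euw: "E u w" using suc sp by (simp add: successively_append_iff)
  have w1: "walk V E (ys @ [u])" using suc sV sp by (auto simp: walk_def successively_append_iff)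
  have h1: "hd (ys @ [u]) = v" using xs(2) sp by (cases ys) auto
  have d1: "dist V E v u \<le> length ys" using dist_le[OF w1 h1] by simp
  have w2: "walk V E (ys @ [u, w])" using suc sV sp by (auto simp: walk_def successively_append_iff)
  have h2: "hd (ys @ [u, w]) = v" using xs(2) sp by (cases ys) auto
  obtain ws where ws: "walk V E ws" "hd ws = v" "last ws = w" "length ws = Suc (dist V E v w)"
    using dist_walk[OF w2 h2] by auto
  have wsne: "ws \<noteq> []" using ws by (auto simp: walk_def)
  have w3: "walk V E (ws @ zs)"
  proof -
    have "successively E (w # zs)" using suc sp by (simp add: successively_append_iff)
    then have "successively E zs \<and> (zs = [] \<or> E w (hd zs))"
      by (cases zs) auto
    then show ?thesis using ws sV sp wsne unfolding walk_def
      by (auto simp: successively_append_iff)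
  qed
  have h3: "hd (ws @ zs) = v" using ws wsne by simp
  have l3: "last (ws @ zs) = z" using ws xs(3) sp by (cases "zs = []") auto
  have "dist V E v z \<le> dist V E v w + length zs"
    using dist_le[OF w3 h3 l3, of "dist V E v w + length zs"] ws by simp
  moreover have "dist V E v z = length ys + 1 + length zs" using xs(4) sp by simp
  ultimately have "dist V E v w \<ge> length ys + 1" by simp
  then have "dist V E w v > dist V E u v" using d1 dist_sym[OF sg] by (metis le_less_trans less_add_one not_le)
  moreover have "dist V E w v \<le> dist V E u v" using md Euw unfolding maximally_distant_def by blast
  ultimately show False by simp
qed

lemma mmd_cover:
  assumes sg: "simple_graph V E" and m: "mmd V E u v" and S: "strong_resolving_set V E S"
  shows "u \<in> S \<or> v \<in> S"
proof (rule ccontr)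
  assume n: "\<not> (u \<in> S \<or> v \<in> S)"
  have uv: "u \<in> V" "v \<in> V" "u \<noteq> v" using m unfolding mmd_def maximally_distant_def by auto
  then obtain z where z: "z \<in> S" "on_geodesic V E u v z \<or> on_geodesic V E v u z"
    using S unfolding strong_resolving_set_def by blast
  have "u \<noteq> z" "v \<noteq> z" using z n by auto
  then show False using z geo_main[OF sg] m unfolding mmd_def by blast
qed

lemma VSR_sub: "VSR V E \<subseteq> V"
  unfolding VSR_def maximally_distant_def by auto

lemma VSR_ne:
  assumes c: "connected_graph V E" shows "VSR V E \<noteq> {}"
proof -
  have sg: "simple_graph V E" and fin: "finite V" and ne: "V \<noteq> {}"
    using c unfolding connected_graph_def simple_graph_def by auto
  define f where "f = (\<lambda>(a, b). dist V E a b)"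
  let ?m = "Max (f ` (V \<times> V))"
  have fi: "finite (f ` (V \<times> V))" using fin by simp
  have "?m \<in> f ` (V \<times> V)" using fi ne by (intro Max_in) auto
  then obtain u v where uv: "u \<in> V" "v \<in> V" "dist V E u v = ?m" unfolding f_def by auto
  have le: "dist V E a b \<le> ?m" if "a \<in> V" "b \<in> V" for a b
    using Max_ge[OF fi, of "f (a, b)"] that unfolding f_def by auto
  have "maximally_distant V E u v"
    unfolding maximally_distant_def using uv le sg unfolding simple_graph_def by metis
  moreover have "maximally_distant V E v u"
    unfolding maximally_distant_def using uv le sg dist_sym[OF sg, of u v] unfolding simple_graph_def by metis
  ultimately show ?thesis unfolding VSR_def by blast
qed


lemma pf_disj:
  assumes "pair_family V E X"
  shows "\<forall>p\<in>X. \<forall>q\<in>X. p \<noteq> q \<longrightarrow> p \<inter> q = {}"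
proof (intro ballI impI)
  fix p q assume p: "p \<in> X" and q: "q \<in> X" and pq: "p \<noteq> q"
  have fin: "finite X" and two: "\<forall>p\<in>X. card p = 2" and c: "card (\<Union>X) = 2 * card X"
    using assms unfolding pair_family_def by auto
  define R where "R = \<Union>(X - {p})"
  have U: "\<Union>X = p \<union> R" using p unfolding R_def by blast
  have X1: "card X \<ge> 1" using p fin by (metis Suc_leI card_gt_0_iff empty_iff One_nat_def)
  have fU: "finite (\<Union>X)" proof (rule ccontr) assume "infinite (\<Union>X)" then have "card (\<Union>X) = 0" by simp then show False using c X1 by simp qed
  have fp: "finite p" using p fU by (meson Union_upper finite_subset)
  have fR: "finite R" using U fU by simp
  have "card R \<le> sum card (X - {p})" unfolding R_def by (rule card_Union_le_sum_card)
  also have "\<dots> = 2 * card (X - {p})" using two by simp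
  also have "\<dots> = 2 * card X - 2" using p fin by simp
  finally have cR: "card R \<le> 2 * card X - 2" .
  have "card (p \<union> R) + card (p \<inter> R) = card p + card R" using card_Un_Int[OF fp fR] by simp
  moreover note X1
  moreover have "card p = 2" using two p by blast
  ultimately have "card (p \<inter> R) = 0" using U c cR by simp
  then have "p \<inter> R = {}" using fp by simp
  moreover have "q \<subseteq> R" using q pq unfolding R_def by blast
  ultimately show "p \<inter> q = {}" by blast
qed


lemma hit_transversal:
  assumes pf: "pair_family V E X" and hit: "\<forall>p\<in>X. p \<inter> M \<noteq> {}"
  shows "\<exists>Z. transversal V E X Z \<and> Z \<subseteq> M"
proof -
  define f where "f p = (SOME a. a \<in> p \<inter> M)" for p
  have fp: "f p \<in> p \<inter> M" if "p \<in> X" for p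
  proof -
    have "p \<inter> M \<noteq> {}" using hit that by blast
    then show ?thesis unfolding f_def by (simp only: some_in_eq) simp
  qed
  have inj: "inj_on f X"
  proof (rule inj_onI)
    fix p q assume pq: "p \<in> X" "q \<in> X" "f p = f q"
    have a: "f p \<in> p" using fp[OF pq(1)] by simp
    have b: "f p \<in> q" using fp[OF pq(2)] pq(3) by simp
    have "p \<inter> q \<noteq> {}" using a b by blast
    then show "p = q" using pf_disj[OF pf] pq(1,2) by blast
  qed
  have sub: "\<Union>X \<subseteq> VSR V E" using pf unfolding pair_family_def by simp
  have c: "card (f ` X) = card X" by (rule card_image[OF inj])
  have s1: "f ` X \<subseteq> VSR V E"
  proof
    fix z assume "z \<in> f ` X"
    then obtain p where p: "p \<in> X" "z = f p" by blast
    then have "z \<in> p" using fp by simp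
    then show "z \<in> VSR V E" using p(1) sub by blast
  qed
  have s2: "\<forall>p\<in>X. f ` X \<inter> p \<noteq> {}"
  proof
    fix p assume p: "p \<in> X"
    then have "f p \<in> f ` X \<inter> p" using fp by simp
    then show "f ` X \<inter> p \<noteq> {}" by blast
  qed
  have s3: "f ` X \<subseteq> M" using fp by auto
  have "transversal V E X (f ` X)"
    unfolding transversal_def using c s1 s2 by simp
  with s3 show ?thesis by blast
qed

lemma two_elems:
  assumes "2 \<le> card A" shows "\<exists>a b. a \<in> A \<and> b \<in> A \<and> a \<noteq> b"
proof (rule ccontr)
  assume "\<not> ?thesis"
  moreover have "finite A" using assms card.infinite by fastforce
  ultimately have "card A \<le> Suc 0" using card_le_Suc0_iff_eq by blast
  then show False using assms by simp
qed

lemma breaker_from: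
  assumes c: "connected_graph V E" and U: "U \<subseteq> VSR V E" and d: "SR_induced_maxdeg_ge2 V E U"
    and M0: "M0 \<inter> U = {}"
  shows "breaker_wins V (sr_win V E) M0 {} False"
proof -
  have sg: "simple_graph V E" and fin: "finite V"
    using c unfolding connected_graph_def simple_graph_def by auto
  obtain x where x: "x \<in> U" "card {w\<in>U. mmd V E x w} \<ge> 2"
    using d unfolding SR_induced_maxdeg_ge2_def by blast
  obtain w1 w2 where w0: "w1 \<in> {w\<in>U. mmd V E x w}" "w2 \<in> {w\<in>U. mmd V E x w}" "w1 \<noteq> w2"
    using two_elems[OF x(2)] by blast
  have w: "w1 \<in> U" "mmd V E x w1" "w2 \<in> U" "mmd V E x w2" "w1 \<noteq> w2" using w0 by auto
  have UV: "U \<subseteq> V" using U VSR_sub by (rule subset_trans)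
  have inV: "x \<in> V" "w1 \<in> V" "w2 \<in> V" using x(1) w(1) w(3) UV by auto
  have nw: "\<not> sr_win V E M" if nx: "x \<notin> M" and nw12: "w1 \<notin> M \<or> w2 \<notin> M" for M
  proof
    assume "sr_win V E M"
    then obtain S where S: "S \<subseteq> M" "strong_resolving_set V E S" unfolding sr_win_def by blast
    have xS: "x \<notin> S" using S(1) nx by auto
    have "x \<in> S \<or> w1 \<in> S" by (rule mmd_cover[OF sg w(2) S(2)])
    then have "w1 \<in> M" using xS S(1) by auto
    moreover have "x \<in> S \<or> w2 \<in> S" by (rule mmd_cover[OF sg w(4) S(2)])
    then have "w2 \<in> M" using xS S(1) by auto
    ultimately show False using nw12 by simp
  qed
  have xM0: "x \<notin> M0" "w1 \<notin> M0" "w2 \<notin> M0" using M0 x(1) w(1) w(3) by auto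
  have BS: "(x \<in> {x} \<and> x \<notin> M0 \<and> ((w1 \<notin> M0 \<and> w2 \<notin> M0) \<or> (w1 \<in> {x} \<and> w1 \<notin> M0) \<or> (w2 \<in> {x} \<and> w2 \<notin> M0))
           \<longrightarrow> breaker_wins V (sr_win V E) M0 {x} True)"
    using breaker_strategy[OF fin inV(2,3) w(5), of x "sr_win V E" "{x}" M0] nw by blast
  have "breaker_wins V (sr_win V E) M0 {x} True"
    using BS xM0 by simp
  moreover have "x \<in> V - (M0 \<union> {})" using inV(1) xM0(1) by simp
  ultimately show ?thesis by (auto intro: bw_breaker)
qed

theorem mainTheorem2:
  fixes V :: "'a set" and E :: "'a \<Rightarrow> 'a \<Rightarrow> bool"
  assumes "connected_graph V E"
  shows "((\<exists>X. pairing_srs V E X) \<longrightarrow> outcome_M V E)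
       \<and> ((\<exists>X. quasi_pairing_srs V E X) \<longrightarrow> outcome_M V E \<or> outcome_N V E)
       \<and> (SR_induced_maxdeg_ge2 V E (VSR V E) \<longrightarrow> outcome_N V E \<or> outcome_B V E)
       \<and> ((\<forall>u\<in>VSR V E. SR_induced_maxdeg_ge2 V E (VSR V E - {u})) \<longrightarrow> outcome_B V E)"
proof (intro conjI impI)
  note c = assms
  have sg: "simple_graph V E" and fin: "finite V" and ne: "V \<noteq> {}"
    using c unfolding connected_graph_def simple_graph_def by auto
  have pfacts: "(\<forall>p\<in>X. card p = 2) \<and> (\<forall>p\<in>X. \<forall>q\<in>X. p \<noteq> q \<longrightarrow> p \<inter> q = {}) \<and> \<Union>X \<subseteq> V"
    if pf: "pair_family V E X" for X
  proof (intro conjI)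
    show "\<forall>p\<in>X. card p = 2" using pf unfolding pair_family_def by simp
    show "\<forall>p\<in>X. \<forall>q\<in>X. p \<noteq> q \<longrightarrow> p \<inter> q = {}" by (rule pf_disj[OF pf])
    have "\<Union>X \<subseteq> VSR V E" using pf unfolding pair_family_def by simp
    then show "\<Union>X \<subseteq> V" using VSR_sub by (rule subset_trans)
  qed
  {
    assume "\<exists>X. pairing_srs V E X"
    then obtain X where X: "pairing_srs V E X" by blast
    have pf: "pair_family V E X" using X unfolding pairing_srs_def by simp
    have win: "sr_win V E M" if h1: "{} \<subseteq> M" and h2: "\<forall>p\<in>X. p \<inter> M \<noteq> {}" for M
    proof -
      obtain Z where Z: "transversal V E X Z" "Z \<subseteq> M" using hit_transversal[OF pf h2] by blast
      have "strong_resolving_set V E Z" using X Z(1) unfolding pairing_srs_def by simp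
      then show ?thesis using Z(2) unfolding sr_win_def by blast
    qed
    have pp: "\<forall>p\<in>X. card p = 2" "\<forall>p\<in>X. \<forall>q\<in>X. p \<noteq> q \<longrightarrow> p \<inter> q = {}" "\<Union>X \<subseteq> V"
      using pfacts[OF pf] by simp_all
    have "maker_wins V (sr_win V E) {} {} True \<and> maker_wins V (sr_win V E) {} {} False"
      using maker_strategy[OF fin pp, of "{}" "sr_win V E", OF win, where M="{}" and B="{}"] by simp
    then show "outcome_M V E" unfolding outcome_M_def by simp
  }
  {
    assume "\<exists>X. quasi_pairing_srs V E X"
    then obtain X v where X: "pair_family V E X" "v \<in> VSR V E - \<Union>X"
      and Zv: "\<forall>Z. transversal V E X Z \<longrightarrow> strong_resolving_set V E (insert v Z)"
      unfolding quasi_pairing_srs_def by blast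
    have win: "sr_win V E M" if h1: "{v} \<subseteq> M" and h2: "\<forall>p\<in>X. p \<inter> M \<noteq> {}" for M
    proof -
      obtain Z where Z: "transversal V E X Z" "Z \<subseteq> M" using hit_transversal[OF X(1) h2] by blast
      have "strong_resolving_set V E (insert v Z)" using Zv Z(1) by simp
      moreover have "insert v Z \<subseteq> M" using Z(2) h1 by simp
      ultimately show ?thesis unfolding sr_win_def by blast
    qed
    have pp: "\<forall>p\<in>X. card p = 2" "\<forall>p\<in>X. \<forall>q\<in>X. p \<noteq> q \<longrightarrow> p \<inter> q = {}" "\<Union>X \<subseteq> V"
      using pfacts[OF X(1)] by simp_all
    have "maker_wins V (sr_win V E) {v} {} True \<and> maker_wins V (sr_win V E) {v} {} False"
      using maker_strategy[OF fin pp, of "{v}" "sr_win V E", OF win, where M="{v}" and B="{}"] by simp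
    then have MW: "maker_wins V (sr_win V E) {v} {} False" by simp
    have vV: "v \<in> V - ({} \<union> {})" using X(2) VSR_sub[of V E] by auto
    have T: "maker_wins V (sr_win V E) {} {} True" by (rule mw_maker[OF vV]) (simp add: MW)
    show "outcome_M V E \<or> outcome_N V E"
      using T determined[OF fin, of "sr_win V E" "{}" "{}" False]
      unfolding outcome_M_def outcome_N_def by simp
  }
  {
    assume "SR_induced_maxdeg_ge2 V E (VSR V E)"
    then have F: "breaker_wins V (sr_win V E) {} {} False"
      using breaker_from[OF c, of "VSR V E" "{}"] by simp
    show "outcome_N V E \<or> outcome_B V E"
      using F determined[OF fin, of "sr_win V E" "{}" "{}" True]
      unfolding outcome_B_def outcome_N_def by simp
  }
  {
    assume H: "\<forall>u\<in>VSR V E. SR_induced_maxdeg_ge2 V E (VSR V E - {u})"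
    obtain u0 where u0: "u0 \<in> VSR V E" using VSR_ne[OF c] by blast
    have H0: "SR_induced_maxdeg_ge2 V E (VSR V E - {u0})" using H u0 by simp
    have F: "breaker_wins V (sr_win V E) {} {} False"
      by (rule breaker_from[OF c _ H0]) auto
    have Bv: "\<forall>v\<in>V - ({} \<union> {}). breaker_wins V (sr_win V E) (insert v {}) {} False"
    proof
      fix v assume "v \<in> V - ({} \<union> {})"
      show "breaker_wins V (sr_win V E) (insert v {}) {} False"
      proof (cases "v \<in> VSR V E")
        case True
        have "SR_induced_maxdeg_ge2 V E (VSR V E - {v})" using H True by simp
        then show ?thesis by (rule breaker_from[OF c, rotated]) auto
      next
        case False
        show ?thesis by (rule breaker_from[OF c _ H0]) (use False in auto)
      qed
    qed
    have "V - ({} \<union> {}) \<noteq> {}" using ne by simp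
    then have T: "breaker_wins V (sr_win V E) {} {} True"
      using Bv by (rule bw_maker)
    show "outcome_B V E" using F T unfolding outcome_B_def by simp
  }
qed


end
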